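(* In the linear deterministic diamond network with a disturbing node with gains $n_1,n_2,n_3,n_4,m$, suppose $n_1=n_2$ and $m<n_1$. Then the linear capacity is $C=\min\big(n_1-m,\ \max(n_3,n_4)\big)$.
   Context: The shift matrix $Q$ is the $q\times q$ matrix over $\mathbb{F}_2$ with $Q_{i+1,i}=1$ for $1\le i\le q-1$ and all other entries $0$, where $q=\max(n_1,n_2,n_3,n_4,m)$ and all gains are nonnegative integers. Network: source $S$, relays $A,B$, destination $D$, disturbing node $M$; gains $n_1$ ($S\to A$), $n_2$ ($S\to B$), $n_3$ ($A\to D$), $n_4$ ($B\to D$), $m$ ($M\to A$ and $M\to B$). Each node transmits $x_i\in\mathbb{F}_2^q$ and receives $y_j=\sum_{k:(k,j)\text{ an edge}}Q^{q-n_{(k,j)}}x_k$; relays use linear maps $x_A=G_Ay_A$, $x_B=G_By_B$ with $G_A,G_B$ arbitrary $q\times q$ matrices over $\mathbb{F}_2$. Then $y_D=G_Sx_S+G_Mx_M$ with $G_S=Q^{q-n_3}G_AQ^{q-n_1}+Q^{q-n_4}G_BQ^{q-n_2}$ and $G_M=Q^{q-n_3}G_AQ^{q-m}+Q^{q-n_4}G_BQ^{q-m}$. The rate $R(G_A,G_B)$ is the maximum dimension of a subspace $\mathcal{X}\subseteq\mathbb{F}_2^q$ such that for all $x_S,x_S'\in\mathcal{X}$, $x_M,x_M'\in\mathbb{F}_2^q$, $G_Sx_S+G_Mx_M=G_Sx_S'+G_Mx_M'$ implies $x_S=x_S'$. The linear capacity is $C=\max_{G_A,G_B}R(G_A,G_B)$.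 *)

theory Defs
  imports Complex_Main "HOL-Library.Z2" "HOL-Library.Function_Algebras"
begin

text \<open>Vectors in F_2^q are modelled as functions nat => bit vanishing outside {..<q};
  q x q matrices over F_2 as functions nat => nat => bit vanishing outside {..<q} x {..<q}.
  Indices are 0-based.\<close>

type_synonym f2vec = "nat \<Rightarrow> bit"
type_synonym f2mat = "nat \<Rightarrow> nat \<Rightarrow> bit"

definition vecs :: "nat \<Rightarrow> f2vec set" where
  "vecs q = {x. \<forall>i. q \<le> i \<longrightarrow> x i = 0}"

definition mats :: "nat \<Rightarrow> f2mat set" where
  "mats q = {A. \<forall>i j. q \<le> i \<or> q \<le> j \<longrightarrow> A i j = 0}"

definition scale2 :: "bit \<Rightarrow> f2vec \<Rightarrow> f2vec" where
  "scale2 c x = (\<lambda>i. c * x i)"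

definition mvec :: "nat \<Rightarrow> f2mat \<Rightarrow> f2vec \<Rightarrow> f2vec" where
  "mvec q A x = (\<lambda>i. if i < q then (\<Sum>j<q. A i j * x j) else 0)"

definition mmult :: "nat \<Rightarrow> f2mat \<Rightarrow> f2mat \<Rightarrow> f2mat" where
  "mmult q A B = (\<lambda>i j. if i < q \<and> j < q then (\<Sum>k<q. A i k * B k j) else 0)"

definition madd :: "f2mat \<Rightarrow> f2mat \<Rightarrow> f2mat" where
  "madd A B = (\<lambda>i j. A i j + B i j)"

definition idmat :: "nat \<Rightarrow> f2mat" where
  "idmat q = (\<lambda>i j. if i < q \<and> j < q \<and> i = j then 1 else 0)"

fun mpow :: "nat \<Rightarrow> f2mat \<Rightarrow> nat \<Rightarrow> f2mat" where
  "mpow q A 0 = idmat q"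
| "mpow q A (Suc k) = mmult q A (mpow q A k)"

text \<open>Shift matrix: Q_{i+1,i} = 1 (1-based), i.e. entry (j+1, j) = 1 for 0-based j with j+1 < q.\<close>
definition shiftQ :: "nat \<Rightarrow> f2mat" where
  "shiftQ q = (\<lambda>i j. if i < q \<and> j < q \<and> i = Suc j then 1 else 0)"

definition qdim :: "nat \<Rightarrow> nat \<Rightarrow> nat \<Rightarrow> nat \<Rightarrow> nat \<Rightarrow> nat" where
  "qdim n1 n2 n3 n4 m = Max {n1, n2, n3, n4, m}"

definition GS :: "nat \<Rightarrow> nat \<Rightarrow> nat \<Rightarrow> nat \<Rightarrow> nat \<Rightarrow> f2mat \<Rightarrow> f2mat \<Rightarrow> f2mat" where
  "GS n1 n2 n3 n4 m GA GB =
     (let q = qdim n1 n2 n3 n4 m; Q = shiftQ q in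
      madd (mmult q (mmult q (mpow q Q (q - n3)) GA) (mpow q Q (q - n1)))
           (mmult q (mmult q (mpow q Q (q - n4)) GB) (mpow q Q (q - n2))))"

definition GM :: "nat \<Rightarrow> nat \<Rightarrow> nat \<Rightarrow> nat \<Rightarrow> nat \<Rightarrow> f2mat \<Rightarrow> f2mat \<Rightarrow> f2mat" where
  "GM n1 n2 n3 n4 m GA GB =
     (let q = qdim n1 n2 n3 n4 m; Q = shiftQ q in
      madd (mmult q (mmult q (mpow q Q (q - n3)) GA) (mpow q Q (q - m)))
           (mmult q (mmult q (mpow q Q (q - n4)) GB) (mpow q Q (q - m))))"

definition good_subspace :: "nat \<Rightarrow> f2mat \<Rightarrow> f2mat \<Rightarrow> f2vec set \<Rightarrow> bool" where
  "good_subspace q Gs Gm X \<longleftrightarrow>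
     X \<subseteq> vecs q \<and> Modules.module.subspace scale2 X \<and>
     (\<forall>xs\<in>X. \<forall>xs'\<in>X. \<forall>xm\<in>vecs q. \<forall>xm'\<in>vecs q.
        mvec q Gs xs + mvec q Gm xm = mvec q Gs xs' + mvec q Gm xm' \<longrightarrow> xs = xs')"

definition rate :: "nat \<Rightarrow> nat \<Rightarrow> nat \<Rightarrow> nat \<Rightarrow> nat \<Rightarrow> f2mat \<Rightarrow> f2mat \<Rightarrow> nat" where
  "rate n1 n2 n3 n4 m GA GB =
     (let q = qdim n1 n2 n3 n4 m in
      Max {Vector_Spaces.vector_space.dim scale2 X | X.
             good_subspace q (GS n1 n2 n3 n4 m GA GB) (GM n1 n2 n3 n4 m GA GB) X})"

definition linear_capacity :: "nat \<Rightarrow> nat \<Rightarrow> nat \<Rightarrow> nat \<Rightarrow> nat \<Rightarrow> nat" where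
  "linear_capacity n1 n2 n3 n4 m =
     Max {rate n1 n2 n3 n4 m GA GB | GA GB.
            GA \<in> mats (qdim n1 n2 n3 n4 m) \<and> GB \<in> mats (qdim n1 n2 n3 n4 m)}"

end

theory Submission
  imports Defs
begin

declare add_bit_eq_xor[simp del] mult_bit_eq_and[simp del]

lemma bit_add_self[simp]: "(a::bit) + a = 0"
  by (cases "a = 0") auto

interpretation V: vector_space scale2
  by unfold_locales (auto simp: scale2_def fun_eq_iff distrib_left distrib_right)

lemma fun_add_self[simp]: "(x::f2vec) + x = 0"
  by (auto simp: fun_eq_iff)

lemma mvec_add: "mvec q A (x + y) = mvec q A x + mvec q A y"
  by (auto simp: mvec_def fun_eq_iff distrib_left sum.distrib)

lemma mvec_zero[simp]: "mvec q A 0 = 0"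
  by (auto simp: mvec_def fun_eq_iff)

lemma mvec_scale: "mvec q A (scale2 c x) = scale2 c (mvec q A x)"
  by (simp add: mvec_def scale2_def fun_eq_iff sum_distrib_left mult.left_commute)

lemma mvec_mmult: "mvec q (mmult q A B) x = mvec q A (mvec q B x)"
proof -
  have "(\<Sum>j<q. (\<Sum>k<q. A i k * B k j) * x j) = (\<Sum>k<q. A i k * (\<Sum>j<q. B k j * x j))" for i
  proof -
    have "(\<Sum>j<q. (\<Sum>k<q. A i k * B k j) * x j) = (\<Sum>j<q. \<Sum>k<q. A i k * B k j * x j)"
      by (simp add: sum_distrib_right)
    also have "\<dots> = (\<Sum>k<q. \<Sum>j<q. A i k * B k j * x j)"
      by (rule sum.swap)
    also have "\<dots> = (\<Sum>k<q. A i k * (\<Sum>j<q. B k j * x j))"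
      by (simp add: sum_distrib_left mult.assoc)
    finally show ?thesis .
  qed
  then show ?thesis by (simp add: mvec_def mmult_def fun_eq_iff)
qed

lemma mvec_madd: "mvec q (madd A B) x = mvec q A x + mvec q B x"
  by (simp add: mvec_def madd_def fun_eq_iff distrib_right sum.distrib)

definition sv :: "nat \<Rightarrow> nat \<Rightarrow> f2vec \<Rightarrow> f2vec" where
  "sv q k x = (\<lambda>i. if i < q \<and> k \<le> i then x (i - k) else 0)"

lemma mvec_Q: "mvec q (shiftQ q) y i = (if i < q \<and> 0 < i then y (i - 1) else 0)"
proof (cases "i < q \<and> 0 < i")
  case True
  have "(\<Sum>j<q. (if i < q \<and> j < q \<and> i = Suc j then 1 else 0) * y j) = (\<Sum>j<q. if j = i - 1 then y j else 0)"
    using True by (intro sum.cong) auto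
  also have "\<dots> = y (i - 1)" using True by auto
  finally show ?thesis using True by (simp add: mvec_def shiftQ_def)
next
  case False
  then show ?thesis by (auto simp: mvec_def shiftQ_def)
qed

lemma mvec_id: "mvec q (idmat q) y = sv q 0 y"
proof -
  have "(\<Sum>j<q. (if i < q \<and> j < q \<and> i = j then 1 else 0) * y j) = y i" if "i < q" for i
  proof -
    have "(\<Sum>j<q. (if i < q \<and> j < q \<and> i = j then 1 else 0) * y j) = (\<Sum>j<q. if i = j then y j else 0)"
      using that by (intro sum.cong) auto
    then show ?thesis using that by simp
  qed
  then show ?thesis by (simp add: mvec_def idmat_def sv_def fun_eq_iff)
qed

lemma mvec_pow: "mvec q (mpow q (shiftQ q) k) y = sv q k y"
proof (induction k)
  case 0
  then show ?case by (simp add: mvec_id)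
next
  case (Suc k)
  show ?case
  proof
    fix i
    show "mvec q (mpow q (shiftQ q) (Suc k)) y i = sv q (Suc k) y i"
      unfolding mpow.simps mvec_mmult Suc mvec_Q sv_def
    proof -
      show "(if i < q \<and> 0 < i then (if i - 1 < q \<and> k \<le> i - 1 then y (i - 1 - k) else 0) else 0) = (if i < q \<and> Suc k \<le> i then y (i - Suc k) else 0)"
      proof (cases "i < q \<and> Suc k \<le> i")
      case True
      then have "i - 1 - k = i - Suc k" "i - 1 < q" "k \<le> i - 1" "0 < i" by auto
      then show ?thesis using True by simp
    next
      case False
      then have "\<not> (i < q \<and> 0 < i \<and> i - 1 < q \<and> k \<le> i - 1)" by linarith
      then show ?thesis using False by (simp only: if_False if_not_P) (metis (full_types))
    qed
    qed
  qed
qed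

lemma sum_fun_apply2: "(\<Sum>i\<in>S. g i) (j::nat) = (\<Sum>i\<in>S. (g i j :: bit))"
  by (induct S rule: infinite_finite_induct) auto

definition dl :: "nat \<Rightarrow> f2vec" where "dl i = (\<lambda>j. if j = i then 1 else 0)"

lemma supp_in_span:
  assumes "finite S" "\<forall>i. v i \<noteq> 0 \<longrightarrow> i \<in> S"
  shows "v \<in> V.span (dl ` S)"
proof -
  have "v = (\<Sum>i\<in>S. scale2 (v i) (dl i))"
  proof
    fix j
    have "(\<Sum>i\<in>S. scale2 (v i) (dl i)) j = (\<Sum>i\<in>S. if i = j then v j else 0)"
      unfolding sum_fun_apply2 by (intro sum.cong) (auto simp: scale2_def dl_def)
    also have "\<dots> = v j" using assms by (cases "j \<in> S") auto
    finally show "v j = (\<Sum>i\<in>S. scale2 (v i) (dl i)) j" by simp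
  qed
  also have "\<dots> \<in> V.span (dl ` S)"
    by (intro V.span_sum V.span_scale V.span_base) auto
  finally show ?thesis .
qed

lemma dim_bound:
  fixes f :: "f2vec \<Rightarrow> f2vec"
  assumes X: "V.subspace X" and add: "\<And>x y. f (x + y) = f x + f y"
    and inj: "inj_on f X" and supp: "\<forall>x\<in>X. \<forall>i. f x i \<noteq> 0 \<longrightarrow> i \<in> S" and fin: "finite S"
  shows "V.dim X \<le> card S"
proof -
  have "f 0 + 0 = f 0 + f 0" using add[of 0 0] by simp
  then have f0: "f 0 = 0" by (rule add_left_imp_eq[symmetric])
  have sc: "f (scale2 c x) = scale2 c (f x)" for c x
  proof (cases "c = 0")
    case True
    then show ?thesis by (simp add: f0)
  next
    case False
    then have "c = 1" by simp
    then show ?thesis by simp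
  qed
  interpret H: module_hom scale2 scale2 f
    by (intro module_hom.intro V.module_axioms module_hom_axioms.intro add sc)
  obtain B where B: "B \<subseteq> X" "V.independent B" "X \<subseteq> V.span B" "card B = V.dim X"
    using V.basis_exists by blast
  have "V.span B \<subseteq> X" using B(1) X by (rule V.span_minimal)
  then have injB: "inj_on f (V.span B)" using inj inj_on_subset by blast
  have ind: "V.independent (f ` B)" using H.independent_injective_image[OF B(2) injB] .
  have "f ` B \<subseteq> V.span (dl ` S)"
  proof
    fix y assume "y \<in> f ` B"
    then obtain x where "x \<in> B" "y = f x" by blast
    then have "x \<in> X" using B(1) by blast
    then have "\<forall>i. y i \<noteq> 0 \<longrightarrow> i \<in> S" using supp \<open>y = f x\<close> by blast
    then show "y \<in> V.span (dl ` S)" by (rule supp_in_span[OF fin])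
  qed
  then have "card (f ` B) \<le> card (dl ` S)"
    using V.independent_span_bound[OF finite_imageI[OF fin] ind] by blast
  also have "\<dots> \<le> card S" by (rule card_image_le[OF fin])
  finally have "card (f ` B) \<le> card S" .
  moreover have "card (f ` B) = card B"
    using injB V.span_superset by (intro card_image) (blast intro: inj_on_subset)
  ultimately show ?thesis using B(4) by simp
qed

lemma dl_indep: "V.independent (dl ` S)"
proof -
  have "a \<notin> V.span (dl ` S - {a})" if aS: "a \<in> dl ` S" for a
  proof
    assume a: "a \<in> V.span (dl ` S - {a})"
    obtain t where t: "a = dl t" using aS by blast
    have "(\<lambda>v. v t = 0) a"
      using a
    proof (induction rule: V.span_induct)
      case base
      show ?case by (rule V.subspaceI) (auto simp: scale2_def)
    next
      case (step x)
      then show ?case using t by (auto simp: dl_def)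
    qed
    then show False using t by (simp add: dl_def)
  qed
  then show ?thesis unfolding V.dependent_def by blast
qed

lemma dim_lower:
  assumes "dl ` {..<k} \<subseteq> X" "X \<subseteq> V.span (dl ` {..<k})"
  shows "V.dim X = k"
proof -
  have "inj_on dl {..<k}" by (auto simp: inj_on_def dl_def fun_eq_iff)
  then have "card (dl ` {..<k}) = k" by (simp add: card_image)
  then show ?thesis using V.dim_unique[OF assms dl_indep] by simp
qed

lemma qdim_ge:
  "n1 \<le> qdim n1 n2 n3 n4 m" "n2 \<le> qdim n1 n2 n3 n4 m" "n3 \<le> qdim n1 n2 n3 n4 m"
  "n4 \<le> qdim n1 n2 n3 n4 m" "m \<le> qdim n1 n2 n3 n4 m"
  by (auto simp: qdim_def)

lemma mvec_GS:
  assumes q: "q = qdim n1 n2 n3 n4 m"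
  shows "mvec q (GS n1 n2 n3 n4 m GA GB) x =
    sv q (q - n3) (mvec q GA (sv q (q - n1) x)) + sv q (q - n4) (mvec q GB (sv q (q - n2) x))"
  by (simp add: GS_def Let_def q[symmetric] mvec_madd mvec_mmult mvec_pow)

lemma mvec_GM:
  assumes q: "q = qdim n1 n2 n3 n4 m"
  shows "mvec q (GM n1 n2 n3 n4 m GA GB) x =
    sv q (q - n3) (mvec q GA (sv q (q - m) x)) + sv q (q - n4) (mvec q GB (sv q (q - m) x))"
  by (simp add: GM_def Let_def q[symmetric] mvec_madd mvec_mmult mvec_pow)

lemma sv_zero[simp]: "sv q k 0 = 0"
  by (simp add: sv_def fun_eq_iff)

lemma sv_low: "i < k \<Longrightarrow> sv q k x i = 0" "q \<le> i \<Longrightarrow> sv q k x i = 0"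
  by (auto simp: sv_def)

lemma bit_sum_eq0: "(a::bit) + b = 0 \<Longrightarrow> a = b"
  by (cases "a = 0"; cases "b = 0") auto

lemma fun_sum_eq0: "(x::f2vec) + y = 0 \<Longrightarrow> x = y"
  by (auto simp: fun_eq_iff intro: bit_sum_eq0)

lemma vecs_zero[simp]: "0 \<in> vecs q"
  by (simp add: vecs_def)

lemma good_bound1:
  assumes q: "q = qdim n1 n2 n3 n4 m" and n12: "n1 = n2" and mn: "m < n1"
    and good: "good_subspace q (GS n1 n2 n3 n4 m GA GB) (GM n1 n2 n3 n4 m GA GB) X"
  shows "V.dim X \<le> n1 - m"
proof -
  have Xv: "X \<subseteq> vecs q" and sub: "V.subspace X"
    and dec: "\<And>xs xs' xm xm'. xs \<in> X \<Longrightarrow> xs' \<in> X \<Longrightarrow> xm \<in> vecs q \<Longrightarrow> xm' \<in> vecs q \<Longrightarrow>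
      mvec q (GS n1 n2 n3 n4 m GA GB) xs + mvec q (GM n1 n2 n3 n4 m GA GB) xm =
      mvec q (GS n1 n2 n3 n4 m GA GB) xs' + mvec q (GM n1 n2 n3 n4 m GA GB) xm' \<Longrightarrow> xs = xs'"
    using good unfolding good_subspace_def by blast+
  have qn1: "n1 \<le> q" using qdim_ge q by simp
  define f where "f = (\<lambda>(x::f2vec) i. if i < n1 - m then x i else 0)"
  have "V.dim X \<le> card {..<n1 - m}"
  proof (rule dim_bound[OF sub, of f])
    show "f (x + y) = f x + f y" for x y by (auto simp: f_def fun_eq_iff)
    show "\<forall>x\<in>X. \<forall>i. f x i \<noteq> 0 \<longrightarrow> i \<in> {..<n1 - m}" by (auto simp: f_def)
    show "finite {..<n1 - m}" by simp
    show "inj_on f X"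
    proof (rule inj_onI)
      fix x x' assume x: "x \<in> X" and x': "x' \<in> X" and fe: "f x = f x'"
      define d where "d = x + x'"
      have dX: "d \<in> X" using V.subspace_add[OF sub x x'] by (simp add: d_def)
      have dv: "d \<in> vecs q" using dX Xv by blast
      have dlow: "d i = 0" if "i < n1 - m" for i
      proof -
        have "f x i = f x' i" using fe by simp
        then have "x i = x' i" using that by (simp add: f_def)
        then show ?thesis by (simp add: d_def)
      qed
      define z where "z = (\<lambda>j. if j < q then d (j + (n1 - m)) else 0)"
      have zv: "z \<in> vecs q" by (simp add: z_def vecs_def)
      have shift: "sv q (q - n1) d = sv q (q - m) z"
      proof
        fix i
        show "sv q (q - n1) d i = sv q (q - m) z i"
        proof (cases "i < q")
          case False
          then show ?thesis by (simp add: sv_low)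
        next
          case iq: True
          show ?thesis
          proof (cases "q - m \<le> i")
            case True
            then have "i - (q - m) < q" "i - (q - m) + (n1 - m) = i - (q - n1)" "q - n1 \<le> i"
              using iq qn1 mn by auto
            then show ?thesis using True iq by (simp add: sv_def z_def)
          next
            case False
            then have "sv q (q - m) z i = 0" by (simp add: sv_low)
            moreover have "sv q (q - n1) d i = 0"
            proof (cases "q - n1 \<le> i")
              case True
              then have "i - (q - n1) < n1 - m" using False qn1 mn by auto
              then show ?thesis using True iq dlow by (simp add: sv_def)
            next
              case False
              then show ?thesis by (simp add: sv_low)
            qed
            ultimately show ?thesis by simp
          qed
        qed
      qed
      have "0 \<in> X" using sub by (rule V.subspace_0)
      have "mvec q (GS n1 n2 n3 n4 m GA GB) d + mvec q (GM n1 n2 n3 n4 m GA GB) 0 =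
            mvec q (GS n1 n2 n3 n4 m GA GB) 0 + mvec q (GM n1 n2 n3 n4 m GA GB) z"
        unfolding mvec_GS[OF q] mvec_GM[OF q] using shift n12[symmetric] by simp
      then have "d = 0" using dec[OF dX \<open>0 \<in> X\<close> vecs_zero zv] by blast
      then show "x = x'" unfolding d_def by (rule fun_sum_eq0)
    qed
  qed
  then show ?thesis by simp
qed

lemma good_bound2:
  assumes q: "q = qdim n1 n2 n3 n4 m"
    and good: "good_subspace q (GS n1 n2 n3 n4 m GA GB) (GM n1 n2 n3 n4 m GA GB) X"
  shows "V.dim X \<le> max n3 n4"
proof -
  have Xv: "X \<subseteq> vecs q" and sub: "V.subspace X"
    and dec: "\<And>xs xs' xm xm'. xs \<in> X \<Longrightarrow> xs' \<in> X \<Longrightarrow> xm \<in> vecs q \<Longrightarrow> xm' \<in> vecs q \<Longrightarrow>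
      mvec q (GS n1 n2 n3 n4 m GA GB) xs + mvec q (GM n1 n2 n3 n4 m GA GB) xm =
      mvec q (GS n1 n2 n3 n4 m GA GB) xs' + mvec q (GM n1 n2 n3 n4 m GA GB) xm' \<Longrightarrow> xs = xs'"
    using good unfolding good_subspace_def by blast+
  have qn: "max n3 n4 \<le> q" using qdim_ge q by simp
  have "V.dim X \<le> card {q - max n3 n4..<q}"
  proof (rule dim_bound[OF sub, of "mvec q (GS n1 n2 n3 n4 m GA GB)"])
    show "mvec q (GS n1 n2 n3 n4 m GA GB) (x + y) = mvec q (GS n1 n2 n3 n4 m GA GB) x + mvec q (GS n1 n2 n3 n4 m GA GB) y" for x y
      by (rule mvec_add)
    show "finite {q - max n3 n4..<q}" by simp
    show "inj_on (mvec q (GS n1 n2 n3 n4 m GA GB)) X"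
      by (rule inj_onI) (rule dec[OF _ _ vecs_zero vecs_zero], auto)
    show "\<forall>x\<in>X. \<forall>i. mvec q (GS n1 n2 n3 n4 m GA GB) x i \<noteq> 0 \<longrightarrow> i \<in> {q - max n3 n4..<q}"
    proof (intro ballI allI impI)
      fix x i assume "mvec q (GS n1 n2 n3 n4 m GA GB) x i \<noteq> 0"
      then have ne: "sv q (q - n3) (mvec q GA (sv q (q - n1) x)) i + sv q (q - n4) (mvec q GB (sv q (q - n2) x)) i \<noteq> 0"
        by (simp add: mvec_GS[OF q])
      show "i \<in> {q - max n3 n4..<q}"
      proof (rule ccontr)
        assume "i \<notin> {q - max n3 n4..<q}"
        then have "q \<le> i \<or> (i < q - n3 \<and> i < q - n4)" by auto
        then show False using ne by (auto simp: sv_low)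
      qed
    qed
  qed
  then show ?thesis using qn by simp
qed

lemma good_zero: "good_subspace q Gs Gm {0}"
  unfolding good_subspace_def by (auto intro: V.subspaceI simp: scale2_def)

lemma rate_le:
  assumes n12: "n1 = n2" and mn: "m < n1"
  shows "rate n1 n2 n3 n4 m GA GB \<le> min (n1 - m) (max n3 n4)"
proof -
  define q where "q = qdim n1 n2 n3 n4 m"
  let ?R = "{V.dim X | X. good_subspace q (GS n1 n2 n3 n4 m GA GB) (GM n1 n2 n3 n4 m GA GB) X}"
  have le: "y \<le> min (n1 - m) (max n3 n4)" if "y \<in> ?R" for y
    using that good_bound1[OF q_def n12 mn] good_bound2[OF q_def] by auto
  have fin: "finite ?R" by (rule finite_subset[of _ "{..min (n1 - m) (max n3 n4)}"]) (use le atMost_iff in blast, simp)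
  have ne: "?R \<noteq> {}" using good_zero by blast
  have "Max ?R \<le> min (n1 - m) (max n3 n4)" by (rule Max.boundedI[OF fin ne le])
  then show ?thesis by (simp add: rate_def q_def Let_def)
qed

definition Pm :: "nat \<Rightarrow> nat \<Rightarrow> nat \<Rightarrow> f2mat" where
  "Pm q k s = (\<lambda>i j. if i < k \<and> j = i + s then 1 else 0)"

lemma mvec_Pm:
  assumes "k + s \<le> q"
  shows "mvec q (Pm q k s) y i = (if i < k then y (i + s) else 0)"
proof (cases "i < k")
  case True
  have "(\<Sum>j<q. Pm q k s i j * y j) = (\<Sum>j<q. if j = i + s then y j else 0)"
    using True by (intro sum.cong) (auto simp: Pm_def)
  also have "\<dots> = y (i + s)" using True assms by simp
  finally show ?thesis using True assms by (simp add: mvec_def)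
next
  case False
  then show ?thesis by (simp add: mvec_def Pm_def)
qed

lemma mvec_0mat[simp]: "mvec q (\<lambda>i j. 0) y = 0"
  by (simp add: mvec_def fun_eq_iff)

lemma rate_achieve:
  assumes mn: "m < n1" and q: "q = qdim n1 n2 n3 n4 m" and k: "k = min (n1 - m) (max n3 n4)"
    and GAB: "(GA = Pm q k (q - n1) \<and> GB = (\<lambda>i j. 0) \<and> n4 \<le> n3) \<or> (GB = Pm q k (q - n1) \<and> GA = (\<lambda>i j. 0) \<and> n3 \<le> n4)"
    and n12: "n1 = n2"
  shows "rate n1 n2 n3 n4 m GA GB = k"
proof -
  have qn: "n1 \<le> q" "n3 \<le> q" "n4 \<le> q" "m \<le> q" using qdim_ge q by auto
  have ks: "k + (q - n1) \<le> q" using k qn by auto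
  define X where "X = {x::f2vec. \<forall>i. k \<le> i \<longrightarrow> x i = 0}"
  have P1: "mvec q (Pm q k (q - n1)) (sv q (q - n1) x) = x" if "x \<in> X" for x
  proof
    fix i
    show "mvec q (Pm q k (q - n1)) (sv q (q - n1) x) i = x i"
    proof (cases "i < k")
      case True
      then have "i + (q - n1) < q" "i + (q - n1) - (q - n1) = i" using ks by auto
      then show ?thesis using True ks by (simp add: mvec_Pm sv_def)
    next
      case False
      then show ?thesis using that ks by (simp add: mvec_Pm X_def)
    qed
  qed
  have P2: "mvec q (Pm q k (q - n1)) (sv q (q - m) z) = 0" for z
  proof
    fix i
    show "mvec q (Pm q k (q - n1)) (sv q (q - m) z) i = 0 i"
    proof (cases "i < k")
      case True
      then have "i + (q - n1) < q - m" using k qn mn by auto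
      then show ?thesis using True ks by (simp add: mvec_Pm sv_low)
    next
      case False
      then show ?thesis using ks by (simp add: mvec_Pm)
    qed
  qed
  define n' where "n' = max n3 n4"
  have GSx: "mvec q (GS n1 n2 n3 n4 m GA GB) x = sv q (q - n') x" if "x \<in> X" for x
    using GAB unfolding mvec_GS[OF q] n'_def using P1[OF that] n12[symmetric] by (auto simp: max_def)
  have GMz: "mvec q (GM n1 n2 n3 n4 m GA GB) z = 0" for z
    using GAB unfolding mvec_GM[OF q] using P2 by auto
  have kn': "k \<le> n'" "n' \<le> q" using k qn by (auto simp: n'_def)
  have goodX: "good_subspace q (GS n1 n2 n3 n4 m GA GB) (GM n1 n2 n3 n4 m GA GB) X"
    unfolding good_subspace_def
  proof (intro conjI ballI impI)
    show "X \<subseteq> vecs q" using kn' by (auto simp: X_def vecs_def)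
    show "V.subspace X" by (rule V.subspaceI) (auto simp: X_def scale2_def)
    fix xs xs' xm xm'
    assume xs: "xs \<in> X" and xs': "xs' \<in> X"
      and e: "mvec q (GS n1 n2 n3 n4 m GA GB) xs + mvec q (GM n1 n2 n3 n4 m GA GB) xm =
       mvec q (GS n1 n2 n3 n4 m GA GB) xs' + mvec q (GM n1 n2 n3 n4 m GA GB) xm'"
    then have e2: "sv q (q - n') xs = sv q (q - n') xs'" by (simp add: GSx GMz)
    show "xs = xs'"
    proof
      fix i
      show "xs i = xs' i"
      proof (cases "i < k")
        case True
        have "sv q (q - n') xs (i + (q - n')) = sv q (q - n') xs' (i + (q - n'))" using e2 by simp
        moreover have "i + (q - n') < q" "i + (q - n') - (q - n') = i" using True kn' by auto
        ultimately show ?thesis by (simp add: sv_def)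
      next
        case False
        then show ?thesis using xs xs' by (simp add: X_def)
      qed
    qed
  qed
  have dimX: "V.dim X = k"
  proof (rule dim_lower)
    show "dl ` {..<k} \<subseteq> X" by (auto simp: X_def dl_def)
    show "X \<subseteq> V.span (dl ` {..<k})"
    proof
      fix x assume "x \<in> X"
      then have "\<forall>i. x i \<noteq> 0 \<longrightarrow> i \<in> {..<k}" by (auto simp: X_def not_less[symmetric])
      then show "x \<in> V.span (dl ` {..<k})" by (intro supp_in_span) auto
    qed
  qed
  let ?R = "{V.dim X | X. good_subspace q (GS n1 n2 n3 n4 m GA GB) (GM n1 n2 n3 n4 m GA GB) X}"
  have le: "y \<le> k" if "y \<in> ?R" for y
    using that good_bound1[OF q n12 mn] good_bound2[OF q] k by auto
  have fin: "finite ?R" by (rule finite_subset[of _ "{..k}"]) (use le atMost_iff in blast, simp)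
  have "k \<in> ?R" using goodX dimX by blast
  then have "Max ?R = k" using fin le by (intro Max_eqI) auto
  then show ?thesis by (simp add: rate_def q[symmetric] Let_def)
qed

theorem mainTheorem9:
  fixes n1 n2 n3 n4 m :: nat
  assumes "n1 = n2" and "m < n1"
  shows "linear_capacity n1 n2 n3 n4 m = min (n1 - m) (max n3 n4)"
proof -
  define q where "q = qdim n1 n2 n3 n4 m"
  define k where "k = min (n1 - m) (max n3 n4)"
  let ?C = "{rate n1 n2 n3 n4 m GA GB | GA GB. GA \<in> mats q \<and> GB \<in> mats q}"
  have le: "y \<le> k" if "y \<in> ?C" for y
    using that rate_le[OF assms] k_def by auto
  have fin: "finite ?C" by (rule finite_subset[of _ "{..k}"]) (use le atMost_iff in blast, simp)
  have qn: "n1 \<le> q" using qdim_ge q_def by auto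
  have Pmats: "Pm q k (q - n1) \<in> mats q" using qn by (auto simp: mats_def Pm_def k_def)
  have Zmats: "(\<lambda>i j. 0) \<in> mats q" by (simp add: mats_def)
  have "k \<in> ?C"
  proof (cases "n4 \<le> n3")
    case True
    have "rate n1 n2 n3 n4 m (Pm q k (q - n1)) (\<lambda>i j. 0) = k"
      by (rule rate_achieve[OF assms(2) q_def k_def _ assms(1)]) (use True in auto)
    then show ?thesis using Pmats Zmats by (metis (mono_tags, lifting) mem_Collect_eq)
  next
    case False
    have "rate n1 n2 n3 n4 m (\<lambda>i j. 0) (Pm q k (q - n1)) = k"
      by (rule rate_achieve[OF assms(2) q_def k_def _ assms(1)]) (use False in auto)
    then show ?thesis using Pmats Zmats by (metis (mono_tags, lifting) mem_Collect_eq)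
  qed
  then have "Max ?C = k" using fin le by (intro Max_eqI) auto
  then show ?thesis by (simp add: linear_capacity_def q_def k_def)
qed

end
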